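(* Consider ballistic deposition started from the empty configuration. There exists a constant $A>0$ such that, with probability at least $1-\varepsilon_N$ where $\sum_N\varepsilon_N<\infty$ (in the paper's words: almost surely, for all $N$ large enough), $$\max_{i\in G_N}\sigma_i(N)\le A\log N .$$
   Context: Deposition models. Fix an integer $N\ge2$ and let $G_N=\{1,\dots,N\}$. A configuration is $\sigma=(\sigma_1,\dots,\sigma_N)\in\mathbb N^N$, $\sigma_i$ being the height of column (pile) $i$; the cluster is $\bigcup_i\{i\}\times\{0,\dots,\sigma_i\}$. Given the current configuration $\sigma$, an explorer is a walk $S_n=(X_n,Z_n)$, $n\ge0$, with $(X_n)$ i.i.d. uniform on $G_N$, $Z_0=\max_i\sigma_i+1$, and for ballistic deposition $Z_{n+1}-Z_n=-1$ for all $n$ (for diffusive deposition the increments are instead i.i.d. uniform on $\{-1,+1\}$). Let $n^*=\inf\{n\ge0:Z_n\le\sigma_{X_n}\}$ and $X^*=X_{n^*}$; the explorer attaches to column $X^*$, i.e. the new configuration is $\sigma+e_{X^*}$. Explorers are sent one at a time, independently, and $\sigma(t)$ denotes the configuration after $t$ explorers, with $\sigma(0)=(0,\dots,0)$. *)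

theory Defs
  imports "HOL-Probability.Probability"
begin

text \<open>Ballistic deposition on G_N = {1..N}. A configuration is a function
  nat => nat (heights of the columns 1..N; values outside {1..N} are unused, always 0).\<close>

definition max_height :: "nat \<Rightarrow> (nat \<Rightarrow> nat) \<Rightarrow> nat" where
  "max_height N \<sigma> = Max (\<sigma> ` {1..N})"

text \<open>At height 0 it always attaches, since heights are nonnegative.\<close>
fun explore :: "nat \<Rightarrow> (nat \<Rightarrow> nat) \<Rightarrow> nat \<Rightarrow> nat pmf" where
  "explore N \<sigma> 0 = pmf_of_set {1..N}"
| "explore N \<sigma> (Suc z) =
     pmf_of_set {1..N} \<bind> (\<lambda>x. if Suc z \<le> \<sigma> x then return_pmf x else explore N \<sigma> z)"

definition deposit :: "nat \<Rightarrow> (nat \<Rightarrow> nat) \<Rightarrow> (nat \<Rightarrow> nat) pmf" where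
  "deposit N \<sigma> = map_pmf (\<lambda>x. \<sigma>(x := \<sigma> x + 1)) (explore N \<sigma> (max_height N \<sigma> + 1))"

fun config :: "nat \<Rightarrow> nat \<Rightarrow> (nat \<Rightarrow> nat) pmf" where
  "config N 0 = return_pmf (\<lambda>_. 0)"
| "config N (Suc t) = config N t \<bind> deposit N"

end

theory Submission
  imports Defs "HOL-Analysis.Analysis"
begin

lemma explore_pmf_le:
  assumes "N \<ge> 1"
  shows "pmf (explore N \<sigma> z) x \<le> (real (min z (\<sigma> x)) + 1) / real N"
proof (induction z)
  case 0
  have "pmf (explore N \<sigma> 0) x \<le> 1 / real N"
    using assms by (simp add: pmf_of_set indicator_def)
  then show ?case by simp
next
  case (Suc z)
  let ?U = "pmf_of_set {1..N}"
  let ?f = "\<lambda>y. if Suc z \<le> \<sigma> y then return_pmf y else explore N \<sigma> z"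
  have ne: "{1..N} \<noteq> {}" using assms by auto
  have "ennreal (pmf (explore N \<sigma> (Suc z)) x) = (\<integral>\<^sup>+y. ennreal (pmf (?f y) x) \<partial>?U)"
    by (simp add: ennreal_pmf_bind)
  also have "\<dots> \<le> (\<integral>\<^sup>+y. ennreal (indicator {x} y * (if Suc z \<le> \<sigma> x then 1 else 0)) + ennreal (pmf (explore N \<sigma> z) x) \<partial>?U)"
    by (intro nn_integral_mono) (auto simp: indicator_def pmf_nonneg)
  also have "\<dots> = (\<integral>\<^sup>+y. ennreal (if Suc z \<le> \<sigma> x then 1 else 0) * indicator {x} y \<partial>?U) + ennreal (pmf (explore N \<sigma> z) x)"
    by (subst nn_integral_add) (auto simp: indicator_def mult.commute intro!: nn_integral_cong)
  also have "\<dots> = ennreal (if Suc z \<le> \<sigma> x then 1 else 0) * ennreal (pmf ?U x) + ennreal (pmf (explore N \<sigma> z) x)"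
    by (subst nn_integral_cmult_indicator) (auto simp: emeasure_pmf_single)
  also have "\<dots> = ennreal ((if Suc z \<le> \<sigma> x then 1 else 0) * pmf ?U x + pmf (explore N \<sigma> z) x)"
    by (simp add: ennreal_mult ennreal_plus pmf_nonneg)
  finally have *: "pmf (explore N \<sigma> (Suc z)) x \<le> (if Suc z \<le> \<sigma> x then 1 else 0) * pmf ?U x + pmf (explore N \<sigma> z) x"
    by (subst (asm) ennreal_le_iff) (auto simp: pmf_nonneg)
  have U: "pmf ?U x \<le> 1 / real N" using ne by (simp add: pmf_of_set indicator_def)
  show ?case
  proof (cases "Suc z \<le> \<sigma> x")
    case True
    then have "pmf (explore N \<sigma> (Suc z)) x \<le> 1 / real N + (real (min z (\<sigma> x)) + 1) / real N"
      using * U Suc.IH by simp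
    also have "\<dots> = (real (min (Suc z) (\<sigma> x)) + 1) / real N"
      using True by (simp add: add_divide_distrib[symmetric] min_def)
    finally show ?thesis .
  next
    case False
    then have "pmf (explore N \<sigma> (Suc z)) x \<le> (real (min z (\<sigma> x)) + 1) / real N"
      using * Suc.IH by simp
    also have "\<dots> \<le> (real (min (Suc z) (\<sigma> x)) + 1) / real N"
      by (intro divide_right_mono) auto
    finally show ?thesis .
  qed
qed

definition G :: "nat \<Rightarrow> nat \<Rightarrow> real" where
  "G k h = pochhammer (real h + 1) k"

lemma G_pos: "G k h > 0"
  unfolding G_def by (intro pochhammer_pos) auto

lemma G_step: "(real h + 1) * G k (Suc h) = (real h + 1 + real k) * G k h"
proof -
  have "pochhammer (real h + 1) (Suc k) = (real h + 1) * pochhammer (real h + 1 + 1) k"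
    by (rule pochhammer_rec)
  moreover have "pochhammer (real h + 1) (Suc k) = (real h + 1 + real k) * pochhammer (real h + 1) k"
    by (rule pochhammer_rec')
  ultimately show ?thesis unfolding G_def by (simp add: ac_simps)
qed

lemma G_Suc_ge: "G k h \<le> G k (Suc h)"
proof -
  have "(real h + 1) * G k h \<le> (real h + 1 + real k) * G k h"
    using G_pos[of k h] by (intro mult_right_mono) auto
  also have "\<dots> = (real h + 1) * G k (Suc h)" using G_step by simp
  finally show ?thesis by (simp add: mult_le_cancel_left_pos add_pos_nonneg)
qed

lemma G_mono: "h \<le> h' \<Longrightarrow> G k h \<le> G k h'"
  using G_Suc_ge by (rule lift_Suc_mono_le)

lemma G_0: "G k 0 = fact k"
  by (simp add: G_def pochhammer_fact)

lemma G_ge_power: "G k h \<ge> (real h + 1) ^ k"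
proof (induction k)
  case 0 then show ?case by (simp add: G_def)
next
  case (Suc k)
  have "G (Suc k) h = (real h + 1 + real k) * G k h"
    unfolding G_def by (rule pochhammer_rec')
  also have "\<dots> \<ge> (real h + 1) * (real h + 1) ^ k"
    using Suc.IH by (intro mult_mono) auto
  finally show ?case by simp
qed

lemma deposit_step:
  assumes "N \<ge> 1"
  shows "(\<integral>\<^sup>+\<tau>. ennreal (G k (\<tau> x)) \<partial>deposit N \<sigma>) \<le> ennreal ((1 + real k / real N) * G k (\<sigma> x))"
proof -
  let ?e = "explore N \<sigma> (max_height N \<sigma> + 1)"
  define D where "D = G k (Suc (\<sigma> x)) - G k (\<sigma> x)"
  have D: "D = real k * G k (\<sigma> x) / (real (\<sigma> x) + 1)"
    using G_step[of "\<sigma> x" k] unfolding D_def by (simp add: field_simps)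
  have D0: "D \<ge> 0" unfolding D_def using G_Suc_ge by simp
  have "(\<integral>\<^sup>+\<tau>. ennreal (G k (\<tau> x)) \<partial>deposit N \<sigma>)
      = (\<integral>\<^sup>+y. ennreal (G k (\<sigma> x)) + ennreal D * indicator {x} y \<partial>?e)"
  proof -
    have "ennreal (G k (Suc (\<sigma> x))) = ennreal (G k (\<sigma> x)) + ennreal D"
      using D0 G_pos[of k "\<sigma> x"] unfolding D_def by (subst ennreal_plus[symmetric]) auto
    then show ?thesis unfolding deposit_def
      by (auto intro!: nn_integral_cong simp: indicator_def)
  qed
  also have "\<dots> = ennreal (G k (\<sigma> x)) + ennreal D * ennreal (pmf ?e x)"
    by (subst nn_integral_add) (auto simp del: explore.simps simp: nn_integral_cmult_indicator emeasure_pmf_single)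
  also have "\<dots> = ennreal (G k (\<sigma> x) + D * pmf ?e x)"
    using D0 G_pos[of k "\<sigma> x"] by (simp add: ennreal_mult ennreal_plus pmf_nonneg)
  also have "\<dots> \<le> ennreal ((1 + real k / real N) * G k (\<sigma> x))"
  proof (intro ennreal_leI)
    have "pmf ?e x \<le> (real (\<sigma> x) + 1) / real N"
      using explore_pmf_le[OF assms, of \<sigma> "max_height N \<sigma> + 1" x]
      by (smt (verit) divide_right_mono of_nat_0_le_iff of_nat_mono min.cobounded2)
    then have "D * pmf ?e x \<le> D * ((real (\<sigma> x) + 1) / real N)"
      using D0 by (intro mult_left_mono) auto
    also have "\<dots> = real k / real N * G k (\<sigma> x)"
    proof -
      have "real (\<sigma> x) + 1 > 0" "real N > 0" using assms by auto
      moreover have gen: "\<And>a n c::real. a > 0 \<Longrightarrow> n > 0 \<Longrightarrow> c / a * (a / n) = c / n"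
        by (simp add: field_simps)
      ultimately have "real k * G k (\<sigma> x) / (real (\<sigma> x) + 1) * ((real (\<sigma> x) + 1) / real N) = real k * G k (\<sigma> x) / real N"
        by (intro gen)
      then show ?thesis unfolding D by simp
    qed
    finally show "G k (\<sigma> x) + D * pmf ?e x \<le> (1 + real k / real N) * G k (\<sigma> x)"
      by (simp add: algebra_simps)
  qed
  finally show ?thesis .
qed

lemma config_moment:
  assumes "N \<ge> 1"
  shows "(\<integral>\<^sup>+\<tau>. ennreal (G k (\<tau> x)) \<partial>config N t) \<le> ennreal ((1 + real k / real N) ^ t * fact k)"
proof (induction t)
  case 0 then show ?case by (simp add: G_0)
next
  case (Suc t)
  have "(\<integral>\<^sup>+\<tau>. ennreal (G k (\<tau> x)) \<partial>config N (Suc t))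
      = (\<integral>\<^sup>+\<sigma>. (\<integral>\<^sup>+\<tau>. ennreal (G k (\<tau> x)) \<partial>deposit N \<sigma>) \<partial>config N t)"
    by simp
  also have "\<dots> \<le> (\<integral>\<^sup>+\<sigma>. ennreal ((1 + real k / real N) * G k (\<sigma> x)) \<partial>config N t)"
    by (intro nn_integral_mono deposit_step[OF assms])
  also have "\<dots> = (\<integral>\<^sup>+\<sigma>. ennreal (1 + real k / real N) * ennreal (G k (\<sigma> x)) \<partial>config N t)"
    by (intro nn_integral_cong ennreal_mult) (auto simp: G_pos less_imp_le)
  also have "\<dots> = ennreal (1 + real k / real N) * (\<integral>\<^sup>+\<sigma>. ennreal (G k (\<sigma> x)) \<partial>config N t)"
    by (rule nn_integral_cmult) simp
  also have "\<dots> \<le> ennreal (1 + real k / real N) * ennreal ((1 + real k / real N) ^ t * fact k)"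
    using Suc.IH by (intro mult_left_mono) auto
  also have "\<dots> = ennreal ((1 + real k / real N) ^ Suc t * fact k)"
    by (subst ennreal_mult[symmetric]) (auto simp: mult.assoc)
  finally show ?case .
qed

lemma tail_bound:
  assumes N: "N \<ge> 1"
  shows "measure_pmf.prob (config N N) {\<sigma>. 9 * k \<le> \<sigma> x} \<le> exp (- real k)"
proof -
  let ?S = "{\<sigma>::nat\<Rightarrow>nat. 9 * k \<le> \<sigma> x}"
  let ?P = "measure_pmf.prob (config N N) ?S"
  have "ennreal (G k (9 * k)) * emeasure (config N N) ?S
      = (\<integral>\<^sup>+\<sigma>. ennreal (G k (9 * k)) * indicator ?S \<sigma> \<partial>config N N)"
    by (rule nn_integral_cmult_indicator[symmetric]) simp
  also have "\<dots> \<le> (\<integral>\<^sup>+\<sigma>. ennreal (G k (\<sigma> x)) \<partial>config N N)"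
    by (intro nn_integral_mono) (auto simp: indicator_def intro!: ennreal_leI G_mono)
  also have "\<dots> \<le> ennreal ((1 + real k / real N) ^ N * fact k)"
    by (rule config_moment[OF N])
  finally have "ennreal (G k (9 * k) * ?P) \<le> ennreal ((1 + real k / real N) ^ N * fact k)"
    using G_pos[of k "9*k"]
    by (simp add: measure_pmf.emeasure_eq_measure ennreal_mult less_imp_le)
  then have M: "G k (9 * k) * ?P \<le> (1 + real k / real N) ^ N * fact k"
    by (subst (asm) ennreal_le_iff) (auto intro!: mult_nonneg_nonneg)
  have P0: "?P \<ge> 0" by simp
  have E: "(1 + real k / real N) ^ N \<le> exp (real k)"
  proof -
    have "(1 + real k / real N) ^ N \<le> exp (real k / real N) ^ N"
      by (intro power_mono) auto
    also have "\<dots> = exp (real N * (real k / real N))"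
      by (rule exp_of_nat_mult[symmetric])
    also have "\<dots> = exp (real k)" using N by simp
    finally show ?thesis .
  qed
  have F: "fact k \<le> real k ^ k" using fact_le_power[of k] by simp
  have KK: "real k ^ k > 0" by (cases k) auto
  have "9 ^ k * real k ^ k \<le> (real (9 * k) + 1) ^ k"
    by (subst power_mult_distrib[symmetric]) (intro power_mono, auto)
  also have "\<dots> \<le> G k (9 * k)" by (rule G_ge_power)
  finally have "(9 ^ k * real k ^ k) * ?P \<le> G k (9 * k) * ?P"
    using P0 by (intro mult_right_mono) auto
  also have "\<dots> \<le> exp (real k) * real k ^ k"
  proof -
    have "(1 + real k / real N) ^ N * fact k \<le> exp (real k) * real k ^ k"
      by (rule mult_mono[OF E F]) auto
    with M show ?thesis by linarith
  qed
  finally have "real k ^ k * (9 ^ k * ?P) \<le> real k ^ k * exp (real k)"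
    by (simp add: ac_simps)
  then have "9 ^ k * ?P \<le> exp (real k)" using KK by simp
  then have Q: "?P \<le> exp (real k) / 9 ^ k" by (simp add: field_simps)
  have "exp 1 * exp 1 \<le> (9::real)" by (rule order.trans[OF mult_mono[OF exp_le exp_le]]) auto
  then have "exp 1 / 9 \<le> exp (-1::real)" by (simp add: exp_minus field_simps)
  then have "(exp 1 / 9) ^ k \<le> exp (-1::real) ^ k" by (intro power_mono) auto
  also have "\<dots> = exp (- real k)" using exp_of_nat_mult[of k "-1::real"] by simp
  finally have "exp (real k) / 9 ^ k \<le> exp (- real k)"
    using exp_of_nat_mult[of k "1::real"] by (simp add: power_divide)
  with Q show ?thesis by linarith
qed

lemma ln2_ge_half: "ln (2::real) \<ge> 1/2"
proof -
  have "exp (1/2::real) * exp (1/2) = exp 1" by (simp add: exp_add[symmetric])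
  also have "\<dots> \<le> 3" by (rule exp_le)
  finally have h: "exp (1/2::real) * exp (1/2) \<le> 3" .
  have "exp (1/2::real) < 2"
  proof (rule ccontr)
    assume "\<not> exp (1/2::real) < 2"
    then have "2 * 2 \<le> exp (1/2::real) * exp (1/2)" by (intro mult_mono) auto
    with h show False by simp
  qed
  then have "exp (1/2::real) < exp (ln 2)" by simp
  then show ?thesis by (simp only: exp_less_cancel_iff)
qed

lemma bound_N:
  assumes N: "N \<ge> 2"
  shows "measure_pmf.prob (config N N)
               {\<sigma>. real (max_height N \<sigma>) \<le> 45 * ln (real N)} \<ge> 1 - inverse (real N ^ 2)"
proof -
  define k where "k = nat \<lceil>3 * ln (real N)\<rceil>"
  define h where "h = 9 * k"
  have "ln (2::real) \<le> ln (real N)" using N by simp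
  then have lnN: "ln (real N) \<ge> 1/2" using ln2_ge_half by linarith
  have kge: "real k \<ge> 3 * ln (real N)" unfolding k_def by linarith
  have kle: "real k \<le> 3 * ln (real N) + 1" unfolding k_def using lnN by linarith
  have hle: "real h \<le> 45 * ln (real N)" unfolding h_def using kle lnN by simp
  define bad where "bad = (\<Union>x\<in>{1..N}. {\<sigma>::nat\<Rightarrow>nat. h \<le> \<sigma> x})"
  have sub: "UNIV - bad \<subseteq> {\<sigma>. real (max_height N \<sigma>) \<le> 45 * ln (real N)}"
  proof
    fix \<sigma> assume "\<sigma> \<in> UNIV - bad"
    then have lt: "\<forall>x\<in>{1..N}. \<sigma> x < h" unfolding bad_def by auto
    have "max_height N \<sigma> \<in> \<sigma> ` {1..N}" unfolding max_height_def
      using N by (intro Max_in) auto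
    then have "max_height N \<sigma> < h" using lt by auto
    then show "\<sigma> \<in> {\<sigma>. real (max_height N \<sigma>) \<le> 45 * ln (real N)}" using hle by simp
  qed
  have "measure_pmf.prob (config N N) bad \<le> (\<Sum>x\<in>{1..N}. measure_pmf.prob (config N N) {\<sigma>. h \<le> \<sigma> x})"
    unfolding bad_def by (rule measure_pmf.finite_measure_subadditive_finite) auto
  also have "\<dots> \<le> (\<Sum>x\<in>{1..N}. exp (- real k))"
    unfolding h_def using N by (intro sum_mono tail_bound) auto
  also have "\<dots> = real N * exp (- real k)" by simp
  also have "\<dots> \<le> real N * exp (- (3 * ln (real N)))"
    using kge by (intro mult_left_mono) auto
  also have "\<dots> = inverse (real N ^ 2)"
  proof -
    have "exp (3 * ln (real N)) = real N ^ 3"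
      using exp_of_nat_mult[of 3 "ln (real N)"] N by simp
    then show ?thesis using N by (simp add: exp_minus field_simps power3_eq_cube power2_eq_square)
  qed
  finally have B: "measure_pmf.prob (config N N) bad \<le> inverse (real N ^ 2)" .
  have "1 - measure_pmf.prob (config N N) bad = measure_pmf.prob (config N N) (UNIV - bad)"
    using measure_pmf.prob_compl[of bad "config N N"] by simp
  also have "\<dots> \<le> measure_pmf.prob (config N N) {\<sigma>. real (max_height N \<sigma>) \<le> 45 * ln (real N)}"
    by (intro measure_pmf.finite_measure_mono sub) auto
  finally show ?thesis using B by linarith
qed

theorem theorem1p2:
  "\<exists>A::real. A > 0 \<and> (\<exists>\<epsilon>::nat \<Rightarrow> real. (\<forall>N. \<epsilon> N \<ge> 0) \<and> summable \<epsilon> \<and>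
     (\<forall>N\<ge>2. measure_pmf.prob (config N N)
               {\<sigma>. real (max_height N \<sigma>) \<le> A * ln (real N)} \<ge> 1 - \<epsilon> N))"
proof (intro exI conjI allI impI)
  show "(45::real) > 0" by simp
  show "\<And>N. inverse (real N ^ 2) \<ge> 0" by simp
  show "summable (\<lambda>N. inverse (real N ^ 2))" by (rule inverse_power_summable) simp
  show "\<And>N. 2 \<le> N \<Longrightarrow> measure_pmf.prob (config N N)
               {\<sigma>. real (max_height N \<sigma>) \<le> 45 * ln (real N)} \<ge> 1 - inverse (real N ^ 2)"
    by (rule bound_N)
qed

end
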